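(* If $G$ is a $t$-clique-sum of graphs $G_1$ and $G_2$ and $r\in\mathbb{N}$, then $\xi_{[r]}(G)=\max\{\xi_{[r]}(G_1),\xi_{[r]}(G_2)\}$.
   Context: A $t$-clique-sum of $G_1$ and $G_2$ is the graph $G=G_1\cup G_2$ (vertex and edge sets the unions) where $G_1$ and $G_2$ intersect exactly in a complete graph $K_t$ (i.e. $V(G_1)\cap V(G_2)$ has $t$ vertices, pairwise adjacent in both, and $G_1,G_2$ are induced subgraphs of $G$). A $(d;r)$ orthogonal subspace representation of $G$ is a family $\{S_u\}_{u\in V(G)}$ of $r$-dimensional subspaces of $\mathbb{C}^d$ with $S_u\perp S_v$ whenever $uv\in E(G)$; $\xi_{[r]}(G)$ is the least $d$ for which one exists. *)

theory Defs
  imports Complex_Main "HOL-Library.Function_Algebras"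
begin

definition simple_graph :: "'a set \<Rightarrow> 'a set set \<Rightarrow> bool" where
  "simple_graph V E \<longleftrightarrow> finite V \<and> (\<forall>e\<in>E. \<exists>u v. e = {u, v} \<and> u \<in> V \<and> v \<in> V \<and> u \<noteq> v)"

definition clique_sum ::
  "nat \<Rightarrow> 'a set \<Rightarrow> 'a set set \<Rightarrow> 'a set \<Rightarrow> 'a set set \<Rightarrow> 'a set \<Rightarrow> 'a set set \<Rightarrow> bool" where
  "clique_sum t V E V1 E1 V2 E2 \<longleftrightarrow>
     V = V1 \<union> V2 \<and> E = E1 \<union> E2 \<and>
     card (V1 \<inter> V2) = t \<and>
     (\<forall>u\<in>V1 \<inter> V2. \<forall>v\<in>V1 \<inter> V2. u \<noteq> v \<longrightarrow> {u, v} \<in> E1 \<and> {u, v} \<in> E2) \<and>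
     E1 = {e\<in>E. e \<subseteq> V1} \<and> E2 = {e\<in>E. e \<subseteq> V2}"

text \<open>Vectors of C^d are represented as functions nat => complex vanishing from index d on.\<close>
definition cscale :: "complex \<Rightarrow> (nat \<Rightarrow> complex) \<Rightarrow> (nat \<Rightarrow> complex)" where
  "cscale c v = (\<lambda>i. c * v i)"

definition cvecs :: "nat \<Rightarrow> (nat \<Rightarrow> complex) set" where
  "cvecs d = {v. \<forall>i\<ge>d. v i = 0}"

definition cinner :: "nat \<Rightarrow> (nat \<Rightarrow> complex) \<Rightarrow> (nat \<Rightarrow> complex) \<Rightarrow> complex" where
  "cinner d v w = (\<Sum>i<d. v i * cnj (w i))"

definition orth_subspaces :: "nat \<Rightarrow> (nat \<Rightarrow> complex) set \<Rightarrow> (nat \<Rightarrow> complex) set \<Rightarrow> bool" where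
  "orth_subspaces d S T \<longleftrightarrow> (\<forall>x\<in>S. \<forall>y\<in>T. cinner d x y = 0)"

definition subspace_dim :: "nat \<Rightarrow> nat \<Rightarrow> (nat \<Rightarrow> complex) set \<Rightarrow> bool" where
  "subspace_dim d r S \<longleftrightarrow> module.subspace cscale S \<and> S \<subseteq> cvecs d \<and> vector_space.dim cscale S = r"

definition osr :: "'a set \<Rightarrow> 'a set set \<Rightarrow> nat \<Rightarrow> nat \<Rightarrow> ('a \<Rightarrow> (nat \<Rightarrow> complex) set) \<Rightarrow> bool" where
  "osr V E d r S \<longleftrightarrow> (\<forall>u\<in>V. subspace_dim d r (S u)) \<and>
     (\<forall>u\<in>V. \<forall>v\<in>V. {u, v} \<in> E \<longrightarrow> orth_subspaces d (S u) (S v))"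

definition xi :: "nat \<Rightarrow> 'a set \<Rightarrow> 'a set set \<Rightarrow> nat" where
  "xi r V E = (LEAST d. \<exists>S. osr V E d r S)"

end

theory Submission
  imports Defs
begin


lemma sum_fun_apply: "(sum f A) i = (\<Sum>a\<in>A. f a i)" for f :: "'b \<Rightarrow> 'c \<Rightarrow> 'd::comm_monoid_add"
  by (induction A rule: infinite_finite_induct) auto

interpretation cv: vector_space cscale
  by unfold_locales (auto simp: cscale_def algebra_simps)

lemma cscale_apply: "cscale c v i = c * v i" by (simp add: cscale_def)

lemma cinner_add_left: "cinner d (x + y) z = cinner d x z + cinner d y z"
  by (simp add: cinner_def algebra_simps sum.distrib)
lemma cinner_add_right: "cinner d x (y + z) = cinner d x y + cinner d x z"
  by (simp add: cinner_def algebra_simps sum.distrib)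
lemma cinner_diff_left: "cinner d (x - y) z = cinner d x z - cinner d y z"
  by (simp add: cinner_def algebra_simps sum_subtractf)
lemma cinner_diff_right: "cinner d x (y - z) = cinner d x y - cinner d x z"
  by (simp add: cinner_def algebra_simps sum_subtractf)
lemma cinner_scale_left: "cinner d (cscale c x) y = c * cinner d x y"
  by (simp add: cscale_apply cinner_def sum_distrib_left algebra_simps)
lemma cinner_scale_right: "cinner d x (cscale c y) = cnj c * cinner d x y"
  by (simp add: cscale_apply cinner_def sum_distrib_left algebra_simps)
lemma cinner_zero_left[simp]: "cinner d 0 y = 0" by (simp add: cinner_def)
lemma cinner_zero_right[simp]: "cinner d x 0 = 0" by (simp add: cinner_def)
lemma cinner_sum_left: "cinner d (sum f A) y = (\<Sum>a\<in>A. cinner d (f a) y)"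
  unfolding cinner_def sum_fun_apply sum_distrib_right by (rule sum.swap)
lemma cinner_sum_right: "cinner d x (sum f A) = (\<Sum>a\<in>A. cinner d x (f a))"
  unfolding cinner_def sum_fun_apply cnj_sum sum_distrib_left by (rule sum.swap)
lemma cinner_cnj: "cnj (cinner d x y) = cinner d y x"
  by (simp add: cinner_def mult.commute)
lemma cinner_self: "cinner d x x = of_real (\<Sum>i<d. (cmod (x i))^2)"
  unfolding cinner_def of_real_sum by (intro sum.cong refl) (simp only: complex_norm_square)
lemma cinner_self_zero: "x \<in> cvecs d \<Longrightarrow> cinner d x x = 0 \<Longrightarrow> x = 0"
proof -
  assume x: "x \<in> cvecs d" and z: "cinner d x x = 0"
  have "(\<Sum>i<d. (cmod (x i))^2) = 0" using z unfolding cinner_self of_real_eq_0_iff .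
  then have "\<forall>i\<in>{..<d}. (cmod (x i))^2 = 0" by (subst (asm) sum_nonneg_eq_0_iff) auto
  then have "\<forall>i<d. x i = 0" by auto
  then have xi: "x i = 0" if "i < d" for i using that by blast
  show "x = 0"
  proof
    fix i show "x i = 0 i" using x xi by (cases "i < d") (auto simp: cvecs_def)
  qed
qed

lemma cvecs_subspace: "cv.subspace (cvecs d)"
  by (auto simp: cv.subspace_def cvecs_def cscale_apply)

definition onf :: "nat \<Rightarrow> 'i set \<Rightarrow> ('i \<Rightarrow> nat \<Rightarrow> complex) \<Rightarrow> bool" where
  "onf d I e \<longleftrightarrow> (\<forall>i\<in>I. e i \<in> cvecs d) \<and>
     (\<forall>i\<in>I. \<forall>j\<in>I. cinner d (e i) (e j) = (if i = j then 1 else 0))"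

lemma onf_inj: "onf d I e \<Longrightarrow> inj_on e I"
  unfolding onf_def inj_on_def by (metis zero_neq_one)

lemma onf_indep:
  assumes o: "onf d I e" and fin: "finite I"
  shows "cv.independent (e ` I)"
proof
  assume "cv.dependent (e ` I)"
  then obtain u where u: "\<exists>v\<in>e ` I. u v \<noteq> 0" "(\<Sum>v\<in>e ` I. cscale (u v) v) = 0"
    using cv.dependent_finite[of "e ` I"] fin by auto
  then obtain i0 where i0: "i0 \<in> I" "u (e i0) \<noteq> 0" by auto
  have inj: "inj_on e I" by (rule onf_inj[OF o])
  have "0 = cinner d (\<Sum>v\<in>e ` I. cscale (u v) v) (e i0)" using u(2) by simp
  also have "\<dots> = (\<Sum>v\<in>e ` I. u v * cinner d v (e i0))"
    by (simp add: cinner_sum_left cinner_scale_left)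
  also have "\<dots> = (\<Sum>j\<in>I. u (e j) * cinner d (e j) (e i0))"
    by (simp add: sum.reindex[OF inj])
  also have "\<dots> = (\<Sum>j\<in>I. if j = i0 then u (e i0) else 0)"
    using o i0(1) by (intro sum.cong refl) (auto simp: onf_def)
  also have "\<dots> = u (e i0)" using i0(1) fin by simp
  finally show False using i0(2) by simp
qed

lemma span_cvecs: "X \<subseteq> cvecs d \<Longrightarrow> cv.span X \<subseteq> cvecs d"
  by (rule cv.span_minimal[OF _ cvecs_subspace])

lemma onf_sdim:
  assumes o: "onf d {..<r} e"
  shows "subspace_dim d r (cv.span (e ` {..<r}))"
proof -
  have "e ` {..<r} \<subseteq> cvecs d" using o by (auto simp: onf_def)
  moreover have "cv.dim (cv.span (e ` {..<r})) = r"
    using cv.dim_span_eq_card_independent[OF onf_indep[OF o]] card_image[OF onf_inj[OF o]] by simp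
  ultimately show ?thesis unfolding subspace_dim_def using span_cvecs cv.subspace_span by blast
qed

lemma span_orth:
  assumes XY: "\<forall>a\<in>X. \<forall>b\<in>Y. cinner d a b = 0" and x: "x \<in> cv.span X" and y: "y \<in> cv.span Y"
  shows "cinner d x y = 0"
proof -
  have H: "\<forall>b\<in>Y. cinner d x b = 0"
    using x
  proof (induction rule: cv.span_induct_alt)
    case base then show ?case by (intro ballI) (rule cinner_zero_left)
  next
    case (step c x y) then show ?case
      by (intro ballI) (metis XY cinner_add_left cinner_scale_left mult_zero_right add_0)
  qed
  from y show ?thesis
  proof (induction rule: cv.span_induct_alt)
    case base then show ?case by (rule cinner_zero_right)
  next
    case (step c y z) then show ?case
      by (metis H cinner_add_right cinner_scale_right mult_zero_right add_0)
  qed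
qed

definition unitv :: "nat \<Rightarrow> nat \<Rightarrow> complex" where "unitv n = (\<lambda>i. if i = n then 1 else 0)"

lemma cinner_unitv: "cinner d (unitv a) (unitv b) = (if a = b \<and> a < d then 1 else 0)"
proof -
  have e: "unitv a i * cnj (unitv b i) = (if i = a then (if a = b then 1 else 0) else 0)" for i
    by (simp add: unitv_def)
  show ?thesis unfolding cinner_def e by (simp add: sum.delta)
qed

lemma unitv_cvecs: "a < d \<Longrightarrow> unitv a \<in> cvecs d"
  by (auto simp: cvecs_def unitv_def)

lemma osr_exists:
  assumes "simple_graph V E"
  shows "\<exists>S. osr V E (card V * r) r S"
proof -
  obtain h where h: "bij_betw h V {0..<card V}" using ex_bij_betw_finite_nat assms by (auto simp: simple_graph_def)
  define d where "d = card V * r"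
  define e where "e u i = unitv (h u * r + i)" for u i
  have lt: "h u * r + i < d" if "u \<in> V" "i < r" for u i
  proof -
    have "h u < card V" using h that(1) by (auto simp: bij_betw_def)
    then have "h u * r + i < (h u + 1) * r" using that(2) by simp
    also have "\<dots> \<le> card V * r" using \<open>h u < card V\<close> by (intro mult_right_mono) auto
    finally show ?thesis by (simp add: d_def)
  qed
  have eq: "u = v \<and> i = j" if "u \<in> V" "v \<in> V" "i < r" "j < r" "h u * r + i = h v * r + j" for u v i j
  proof -
    have r: "0 < r" using that by simp
    have d1: "(h u * r + i) div r = h u" using that(3) r by simp
    have d2: "(h v * r + j) div r = h v" using that(4) r by simp
    have "h u = h v" using that(5) d1 d2 by metis
    then have "u = v" using h that(1,2) by (auto simp: bij_betw_def inj_on_def)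
    then show ?thesis using that(5) by simp
  qed
  define S where "S u = cv.span (e u ` {..<r})" for u
  have o: "onf d {..<r} (e u)" if u: "u \<in> V" for u
    unfolding onf_def
  proof (intro conjI ballI)
    fix i assume "i \<in> {..<r}"
    then show "e u i \<in> cvecs d" unfolding e_def using lt[OF u] unitv_cvecs by simp
  next
    fix i j assume ij: "i \<in> {..<r}" "j \<in> {..<r}"
    show "cinner d (e u i) (e u j) = (if i = j then 1 else 0)"
      unfolding e_def cinner_unitv using lt[OF u] ij by simp
  qed
  have "osr V E d r S"
    unfolding osr_def
  proof (intro conjI ballI impI)
    fix u assume "u \<in> V" then show "subspace_dim d r (S u)" unfolding S_def by (rule onf_sdim[OF o])
  next
    fix u v assume uv: "u \<in> V" "v \<in> V" "{u, v} \<in> E"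
    show "orth_subspaces d (S u) (S v)"
    proof (cases "u = v")
      case True
      then have "{u} \<in> E" using uv by simp
      then obtain a b where ab: "{u} = {a, b}" "a \<noteq> b" using assms unfolding simple_graph_def by blast
      then have "a = u" "b = u" by (metis insertI1 insert_commute singletonD)+
      then show ?thesis using ab(2) by simp
    next
      case False
      have "cinner d (e u i) (e v j) = 0" if ij: "i \<in> {..<r}" "j \<in> {..<r}" for i j
      proof -
        have "h u * r + i \<noteq> h v * r + j" using eq[of u v i j] uv False ij by auto
        then show ?thesis unfolding e_def cinner_unitv by simp
      qed
      then have "\<forall>a\<in>e u ` {..<r}. \<forall>b\<in>e v ` {..<r}. cinner d a b = 0" by blast
      then show ?thesis
        unfolding orth_subspaces_def S_def using span_orth by blast
    qed
  qed
  then show ?thesis unfolding d_def by blast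
qed

definition unitary :: "nat \<Rightarrow> ((nat \<Rightarrow> complex) \<Rightarrow> (nat \<Rightarrow> complex)) \<Rightarrow> bool" where
  "unitary d U \<longleftrightarrow> (\<forall>x\<in>cvecs d. U x \<in> cvecs d) \<and> (\<forall>x y. cinner d (U x) (U y) = cinner d x y)"

lemma unitary_comp: "unitary d U \<Longrightarrow> unitary d W \<Longrightarrow> unitary d (W \<circ> U)"
  by (auto simp: unitary_def)

definition R :: "nat \<Rightarrow> complex \<Rightarrow> (nat \<Rightarrow> complex) \<Rightarrow> (nat \<Rightarrow> complex) \<Rightarrow> (nat \<Rightarrow> complex)" where
  "R d g w x = x + cscale (g * cinner d x w) w"

lemma R_unitary:
  assumes w: "w \<in> cvecs d" and g: "g + cnj g + g * cnj g * cinner d w w = 0"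
  shows "unitary d (R d g w)"
  unfolding unitary_def
proof (intro conjI ballI allI)
  fix x assume "x \<in> cvecs d"
  then show "R d g w x \<in> cvecs d" using w by (auto simp: R_def cvecs_def cscale_apply)
next
  fix x y
  have c: "cinner d w y = cnj (cinner d y w)" by (simp add: cinner_cnj)
  have "cinner d (R d g w x) (R d g w y) = cinner d x y +
     cinner d x w * cinner d w y * (g + cnj g + g * cnj g * cinner d w w)"
    unfolding R_def cinner_add_left cinner_add_right cinner_scale_left cinner_scale_right c
    by (simp add: algebra_simps)
  then show "cinner d (R d g w x) (R d g w y) = cinner d x y" using g by simp
qed

lemma R_fix: "cinner d x w = 0 \<Longrightarrow> R d g w x = x"
  by (simp add: R_def cscale_def fun_eq_iff)

lemma step_unitary:
  assumes a: "a \<in> cvecs d" "cinner d a a = 1" and b: "b \<in> cvecs d" "cinner d b b = 1"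
  shows "\<exists>W. unitary d W \<and> W a = b \<and> (\<forall>x. cinner d x a = 0 \<and> cinner d x b = 0 \<longrightarrow> W x = x)"
proof -
  define p where "p = cinner d a b"
  define c where "c = (if p = 0 then 1 else p / of_real (cmod p))"
  have c1: "cnj c * p = of_real (cmod p)"
    by (cases "p = 0") (auto simp: c_def complex_norm_square[symmetric] power2_eq_square field_simps)
  have c2: "c * cnj c = 1"
    by (cases "p = 0") (auto simp: c_def complex_norm_square[symmetric] power2_eq_square field_simps)
  have c3: "cnj c * c = 1" using c2 by (simp add: mult.commute)
  define w where "w = a - cscale c b"
  have wv: "w \<in> cvecs d" using a b by (auto simp: w_def cvecs_def cscale_apply)
  have pc: "cinner d b a = cnj p" by (simp add: p_def cinner_cnj)
  have cp: "c * cnj p = of_real (cmod p)" using arg_cong[OF c1, of cnj] by simp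
  have ww: "cinner d w w = 2 - 2 * of_real (cmod p)"
    unfolding w_def cinner_diff_left cinner_diff_right cinner_scale_left cinner_scale_right
    using a b c1 c2 cp pc p_def by (simp add: algebra_simps)
  have aw: "cinner d a w = 1 - of_real (cmod p)"
    unfolding w_def cinner_diff_right cinner_scale_right using a c1 p_def by simp
  define n where "n = cinner d w w"
  define g where "g = (if n = 0 then 0 else - 2 / n)"
  have nreal: "cnj n = n" unfolding n_def by (simp add: cinner_cnj)
  have g0: "g + cnj g + g * cnj g * cinner d w w = 0"
    unfolding g_def n_def[symmetric] using nreal by (auto simp: field_simps)
  have Ha: "R d g w a = cscale c b"
  proof (cases "n = 0")
    case True
    then have "w = 0" using cinner_self_zero[OF wv] by (simp add: n_def)
    then show ?thesis using True by (simp add: R_def g_def w_def fun_eq_iff cscale_def)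
  next
    case False
    have n2: "n = 2 * cinner d a w" using aw ww n_def by simp
    have "g * cinner d a w = -1" using False n2 by (simp add: g_def field_simps)
    then show ?thesis by (simp add: R_def w_def fun_eq_iff cscale_def)
  qed
  define g' where "g' = cnj c - 1"
  have g'0: "g' + cnj g' + g' * cnj g' * cinner d b b = 0"
    using b c2 c3 by (simp add: g'_def algebra_simps)
  have cg: "c + g' * c = 1" using c3 by (simp add: g'_def algebra_simps)
  have Pb: "R d g' b (cscale c b) = b"
    unfolding R_def cinner_scale_left b(2)
  proof
    fix x
    have "c * b x + g' * (c * 1) * b x = (c + g' * c) * b x" by (simp add: algebra_simps)
    then show "(cscale c b + cscale (g' * (c * 1)) b) x = b x" using cg by (simp add: cscale_apply)
  qed
  define W where "W = R d g' b \<circ> R d g w"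
  have "unitary d W" unfolding W_def
    by (rule unitary_comp[OF R_unitary[OF wv g0] R_unitary[OF b(1) g'0]])
  moreover have "W a = b" using Ha Pb by (simp add: W_def)
  moreover have "\<forall>x. cinner d x a = 0 \<and> cinner d x b = 0 \<longrightarrow> W x = x"
  proof (intro allI impI)
    fix x assume x: "cinner d x a = 0 \<and> cinner d x b = 0"
    then have "cinner d x w = 0" by (simp add: w_def cinner_diff_right cinner_scale_right)
    then show "W x = x" using x by (simp add: W_def R_fix)
  qed
  ultimately show ?thesis by blast
qed



lemma onf_mono: "onf d J e \<Longrightarrow> I \<subseteq> J \<Longrightarrow> onf d I e"
  unfolding onf_def by blast

lemma unitary_exists:
  assumes "finite I" "onf d I a" "onf d I b"
  shows "\<exists>U. unitary d U \<and> (\<forall>i\<in>I. U (a i) = b i)"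
  using assms
proof (induction I rule: finite_induct)
  case empty
  have "unitary d id" by (simp add: unitary_def)
  then show ?case by blast
next
  case (insert j I)
  obtain U where U: "unitary d U" "\<forall>i\<in>I. U (a i) = b i"
    using insert.IH insert.prems onf_mono[of d "insert j I" _ I] by blast
  have aj: "a j \<in> cvecs d" "cinner d (a j) (a j) = 1" and bj: "b j \<in> cvecs d" "cinner d (b j) (b j) = 1"
    using insert.prems by (auto simp: onf_def)
  have Uaj: "U (a j) \<in> cvecs d" "cinner d (U (a j)) (U (a j)) = 1"
    using U(1) aj by (auto simp: unitary_def)
  obtain W where W: "unitary d W" "W (U (a j)) = b j"
    "\<forall>x. cinner d x (U (a j)) = 0 \<and> cinner d x (b j) = 0 \<longrightarrow> W x = x"
    using step_unitary[OF Uaj bj] by blast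
  have "(W \<circ> U) (a i) = b i" if i: "i \<in> insert j I" for i
  proof (cases "i = j")
    case True then show ?thesis using W by simp
  next
    case False
    then have iI: "i \<in> I" using i by simp
    have "cinner d (b i) (U (a j)) = cinner d (U (a i)) (U (a j))" using U(2) iI by simp
    also have "\<dots> = cinner d (a i) (a j)" using U(1) by (simp add: unitary_def)
    also have "\<dots> = 0" using insert.prems(1) iI False by (auto simp: onf_def)
    finally have 1: "cinner d (b i) (U (a j)) = 0" .
    have 2: "cinner d (b i) (b j) = 0" using insert.prems(2) iI False by (auto simp: onf_def)
    show ?thesis using W(3) 1 2 U(2) iI by simp
  qed
  moreover have "unitary d (W \<circ> U)" by (rule unitary_comp[OF U(1) W(1)])
  ultimately show ?case by blast
qed

definition ons :: "nat \<Rightarrow> (nat \<Rightarrow> complex) set \<Rightarrow> bool" where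
  "ons d B \<longleftrightarrow> B \<subseteq> cvecs d \<and> (\<forall>x\<in>B. \<forall>y\<in>B. cinner d x y = (if x = y then 1 else 0))"

lemma gram_schmidt:
  "set xs \<subseteq> cvecs d \<Longrightarrow> \<exists>B. finite B \<and> ons d B \<and> cv.span B = cv.span (set xs)"
proof (induction xs)
  case Nil
  show ?case by (rule exI[of _ "{}"]) (simp add: ons_def)
next
  case (Cons x xs)
  obtain B where B: "finite B" "ons d B" "cv.span B = cv.span (set xs)"
    using Cons by auto
  have xv: "x \<in> cvecs d" using Cons.prems by simp
  define s where "s = (\<Sum>b\<in>B. cscale (cinner d x b) b)"
  define y where "y = x - s"
  have sB: "s \<in> cv.span B" unfolding s_def
    by (intro cv.span_sum cv.span_scale cv.span_base)
  have sv: "s \<in> cvecs d" using sB span_cvecs[of B d] B(2) by (auto simp: ons_def)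
  have yv: "y \<in> cvecs d" using xv sv by (auto simp: y_def cvecs_def)
  have yorth: "cinner d y b0 = 0" if b0: "b0 \<in> B" for b0
  proof -
    have "cinner d s b0 = (\<Sum>b\<in>B. cinner d x b * cinner d b b0)"
      by (simp add: s_def cinner_sum_left cinner_scale_left)
    also have "\<dots> = (\<Sum>b\<in>B. if b = b0 then cinner d x b else 0)"
      using B(2) b0 by (intro sum.cong refl) (auto simp: ons_def)
    also have "\<dots> = cinner d x b0" using B(1) b0 by simp
    finally show ?thesis by (simp add: y_def cinner_diff_left)
  qed
  have spx: "cv.span (insert x (set xs)) = cv.span (insert x B)"
    using B(3) by (simp add: cv.span_insert)
  show ?case
  proof (cases "y = 0")
    case True
    then have "x = s" by (simp add: y_def)
    then have "x \<in> cv.span B" using sB by simp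
    then have "cv.span (insert x B) = cv.span B" by (rule cv.span_redundant)
    then show ?thesis using B spx by auto
  next
    case False
    define t where "t = (\<Sum>i<d. (cmod (y i))^2)"
    have yy: "cinner d y y = of_real t" by (simp add: t_def cinner_self)
    have t0: "t \<noteq> 0" using False cinner_self_zero[OF yv] yy by auto
    have tpos: "t > 0" using t0 unfolding t_def by (metis sum_nonneg zero_le_power2 order_le_neq_trans)
    define k where "k = complex_of_real (1 / sqrt t)"
    have k0: "k \<noteq> 0" using tpos by (simp add: k_def)
    define z where "z = cscale k y"
    have zv: "z \<in> cvecs d" using yv by (auto simp: z_def cvecs_def cscale_apply)
    have zz: "cinner d z z = 1"
    proof -
      have "cinner d z z = k * cnj k * of_real t"
        by (simp add: z_def cinner_scale_left cinner_scale_right yy)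
      also have "\<dots> = of_real ((1 / sqrt t)^2 * t)"
        unfolding k_def complex_cnj_complex_of_real of_real_mult power2_eq_square ..
      also have "(1 / sqrt t)^2 = 1 / t" using tpos by (simp add: power_divide)
      also have "of_real (1 / t * t) = (1::complex)" using tpos by simp
      finally show ?thesis .
    qed
    have zb: "cinner d z b = 0" if "b \<in> B" for b
      using yorth[OF that] by (simp add: z_def cinner_scale_left)
    have bz: "cinner d b z = 0" if "b \<in> B" for b
      using zb[OF that] by (metis cinner_cnj complex_cnj_zero)
    have znB: "z \<notin> B" using zb zz by force
    have "ons d (insert z B)"
      using B(2) zv zz zb bz unfolding ons_def by auto
    moreover have "cv.span (insert z B) = cv.span (insert x B)"
      unfolding cv.span_eq
    proof (intro conjI)
      have "z = cscale k x - cscale k s" by (simp add: z_def y_def fun_eq_iff algebra_simps cscale_apply)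
      moreover have "x \<in> cv.span (insert x B)" by (simp add: cv.span_base)
      moreover have "s \<in> cv.span (insert x B)" using sB cv.span_mono[of B "insert x B"] by auto
      ultimately have "z \<in> cv.span (insert x B)" by (simp add: cv.span_diff cv.span_scale)
      then show "insert z B \<subseteq> cv.span (insert x B)"
        using cv.span_superset[of "insert x B"] by auto
    next
      have "x = cscale (1 / k) z + s" using k0 by (simp add: z_def y_def fun_eq_iff cscale_apply)
      moreover have "z \<in> cv.span (insert z B)" by (simp add: cv.span_base)
      moreover have "s \<in> cv.span (insert z B)" using sB cv.span_mono[of B "insert z B"] by auto
      ultimately have "x \<in> cv.span (insert z B)" by (simp add: cv.span_add cv.span_scale)
      then show "insert x B \<subseteq> cv.span (insert z B)"
        using cv.span_superset[of "insert z B"] by auto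
    qed
    ultimately show ?thesis using B(1) spx by auto
  qed
qed



lemma cvecs_span_unit: "cvecs d \<subseteq> cv.span (unitv ` {..<d})"
proof
  fix x assume x: "x \<in> cvecs d"
  have "x = (\<Sum>i<d. cscale (x i) (unitv i))"
  proof
    fix j
    have "(\<Sum>i<d. cscale (x i) (unitv i)) j = (\<Sum>i<d. if i = j then x j else 0)"
      unfolding sum_fun_apply by (intro sum.cong refl) (auto simp: cscale_apply unitv_def)
    also have "\<dots> = x j" using x by (auto simp: cvecs_def sum.delta')
    finally show "x j = (\<Sum>i<d. cscale (x i) (unitv i)) j" by simp
  qed
  also have "\<dots> \<in> cv.span (unitv ` {..<d})"
    by (intro cv.span_sum cv.span_scale cv.span_base) auto
  finally show "x \<in> cv.span (unitv ` {..<d})" .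
qed

lemma onb_exists:
  assumes S: "subspace_dim d r S"
  shows "\<exists>e. onf d {..<r} e \<and> cv.span (e ` {..<r}) = S"
proof -
  have Ssub: "cv.subspace S" and Sc: "S \<subseteq> cvecs d" and Sd: "cv.dim S = r"
    using S by (auto simp: subspace_dim_def)
  obtain B where B: "B \<subseteq> S" "cv.independent B" "S \<subseteq> cv.span B" "card B = cv.dim S"
    using cv.basis_exists by blast
  have "finite B"
    using cv.independent_span_bound[of "unitv ` {..<d}" B] B Sc cvecs_span_unit by blast
  then obtain xs where xs: "set xs = B" using finite_list by blast
  have spB: "cv.span B = S"
    using B(1,3) Ssub cv.span_minimal[of B S] by auto
  obtain B' where B': "finite B'" "ons d B'" "cv.span B' = cv.span (set xs)"
    using gram_schmidt[of xs d] xs B(1) Sc by auto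
  have oB': "onf d B' id" using B'(2) by (auto simp: ons_def onf_def)
  have "card B' = r"
    using cv.dim_span_eq_card_independent[OF onf_indep[OF oB' B'(1)]] B'(3) xs spB Sd by simp
  then obtain h where h: "bij_betw h {0..<r} B'" using ex_bij_betw_nat_finite[OF B'(1)] by blast
  have "onf d {..<r} h"
    unfolding onf_def
  proof (intro conjI ballI)
    fix i assume "i \<in> {..<r}" then show "h i \<in> cvecs d"
      using h B'(2) by (auto simp: ons_def bij_betw_def)
  next
    fix i j assume ij: "i \<in> {..<r}" "j \<in> {..<r}"
    then have "h i \<in> B'" "h j \<in> B'" using h by (auto simp: bij_betw_def)
    then have "cinner d (h i) (h j) = (if h i = h j then 1 else 0)" using B'(2) by (auto simp: ons_def)
    moreover have "h i = h j \<longleftrightarrow> i = j" using h ij by (auto simp: bij_betw_def inj_on_def)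
    ultimately show "cinner d (h i) (h j) = (if i = j then 1 else 0)" by simp
  qed
  moreover have "h ` {..<r} = B'" using h by (auto simp: bij_betw_def atLeast0LessThan)
  ultimately show ?thesis using B'(3) xs spB by auto
qed

lemma cinner_lift:
  assumes "x \<in> cvecs d" "d \<le> d'"
  shows "cinner d' x y = cinner d x y"
  unfolding cinner_def
  by (rule sum.mono_neutral_right) (use assms in \<open>auto simp: cvecs_def\<close>)

lemma cvecs_mono: "d \<le> d' \<Longrightarrow> cvecs d \<subseteq> cvecs d'"
  by (auto simp: cvecs_def)

lemma osr_lift:
  assumes "osr V E d r S" "d \<le> d'"
  shows "osr V E d' r S"
  unfolding osr_def
proof (intro conjI ballI impI)
  fix u assume "u \<in> V"
  then show "subspace_dim d' r (S u)"
    using assms cvecs_mono[OF assms(2)] by (auto simp: osr_def subspace_dim_def)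
next
  fix u v assume uv: "u \<in> V" "v \<in> V" "{u, v} \<in> E"
  then have o: "orth_subspaces d (S u) (S v)" and c: "S u \<subseteq> cvecs d"
    using assms by (auto simp: osr_def subspace_dim_def)
  show "orth_subspaces d' (S u) (S v)"
    using o c cinner_lift[OF _ assms(2)] unfolding orth_subspaces_def by (metis subsetD)
qed

lemma osr_restrict: "osr V E d r S \<Longrightarrow> V' \<subseteq> V \<Longrightarrow> E' \<subseteq> E \<Longrightarrow> osr V' E' d r S"
  unfolding osr_def by blast



lemma glue:
  assumes cs: "clique_sum t V E V1 E1 V2 E2" and fin: "finite V1"
    and o1: "osr V1 E1 d r S1" and o2: "osr V2 E2 d r S2"
  shows "\<exists>S. osr V E d r S"
proof -
  have V: "V = V1 \<union> V2" and Eu: "E = E1 \<union> E2"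
    and cl: "\<forall>u\<in>V1 \<inter> V2. \<forall>v\<in>V1 \<inter> V2. u \<noteq> v \<longrightarrow> {u, v} \<in> E1 \<and> {u, v} \<in> E2"
    and E1d: "E1 = {e\<in>E. e \<subseteq> V1}" and E2d: "E2 = {e\<in>E. e \<subseteq> V2}"
    using cs unfolding clique_sum_def by blast+
  have E1s: "\<forall>e\<in>E1. e \<subseteq> V1" using E1d by (metis (mono_tags, lifting) mem_Collect_eq)
  have E2s: "\<forall>e\<in>E2. e \<subseteq> V2" using E2d by (metis (mono_tags, lifting) mem_Collect_eq)
  define K where "K = V1 \<inter> V2"
  have finK: "finite K" using fin by (simp add: K_def)
  have "\<forall>v\<in>V1. \<exists>e. onf d {..<r} e \<and> cv.span (e ` {..<r}) = S1 v"
    using o1 onb_exists by (auto simp: osr_def)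
  then obtain e1 where e1': "\<forall>v\<in>V1. onf d {..<r} (e1 v) \<and> cv.span (e1 v ` {..<r}) = S1 v"
    by (rule bchoice[elim_format]) blast
  have e1: "onf d {..<r} (e1 v) \<and> cv.span (e1 v ` {..<r}) = S1 v" if "v \<in> V1" for v
    using e1' that by blast
  have "\<forall>v\<in>V2. \<exists>e. onf d {..<r} e \<and> cv.span (e ` {..<r}) = S2 v"
    using o2 onb_exists by (auto simp: osr_def)
  then obtain e2 where e2': "\<forall>v\<in>V2. onf d {..<r} (e2 v) \<and> cv.span (e2 v ` {..<r}) = S2 v"
    by (rule bchoice[elim_format]) blast
  have e2: "onf d {..<r} (e2 v) \<and> cv.span (e2 v ` {..<r}) = S2 v" if "v \<in> V2" for v
    using e2' that by blast
  have e1S: "e1 v i \<in> S1 v" if "v \<in> V1" "i < r" for v i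
    using e1[OF that(1)] that(2) cv.span_base[of "e1 v i" "e1 v ` {..<r}"] by auto
  have e2S: "e2 v i \<in> S2 v" if "v \<in> V2" "i < r" for v i
    using e2[OF that(1)] that(2) cv.span_base[of "e2 v i" "e2 v ` {..<r}"] by auto
  define I where "I = K \<times> {..<r}"
  define a where "a p = e2 (fst p) (snd p)" for p
  define b where "b p = e1 (fst p) (snd p)" for p
  have oa: "onf d I a" unfolding onf_def
  proof (intro conjI ballI)
    fix p assume "p \<in> I" then show "a p \<in> cvecs d"
      using e2 by (auto simp: I_def K_def a_def onf_def)
  next
    fix p q assume pq: "p \<in> I" "q \<in> I"
    obtain u i v j where p: "p = (u, i)" and q: "q = (v, j)" by (cases p; cases q) blast
    have uv: "u \<in> K" "v \<in> K" "i < r" "j < r" using pq p q by (auto simp: I_def)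
    show "cinner d (a p) (a q) = (if p = q then 1 else 0)"
    proof (cases "u = v")
      case True
      then show ?thesis using e2[of u] uv by (auto simp: a_def p q onf_def K_def)
    next
      case False
      then have "{u, v} \<in> E2" using cl uv by (auto simp: K_def)
      then have "orth_subspaces d (S2 u) (S2 v)" using o2 uv by (auto simp: osr_def K_def)
      then have "cinner d (e2 u i) (e2 v j) = 0"
        using e2S uv unfolding orth_subspaces_def K_def by blast
      then show ?thesis using False by (simp add: a_def p q)
    qed
  qed
  have ob: "onf d I b" unfolding onf_def
  proof (intro conjI ballI)
    fix p assume "p \<in> I" then show "b p \<in> cvecs d"
      using e1 by (auto simp: I_def K_def b_def onf_def)
  next
    fix p q assume pq: "p \<in> I" "q \<in> I"
    obtain u i v j where p: "p = (u, i)" and q: "q = (v, j)" by (cases p; cases q) blast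
    have uv: "u \<in> K" "v \<in> K" "i < r" "j < r" using pq p q by (auto simp: I_def)
    show "cinner d (b p) (b q) = (if p = q then 1 else 0)"
    proof (cases "u = v")
      case True
      then show ?thesis using e1[of u] uv by (auto simp: b_def p q onf_def K_def)
    next
      case False
      then have "{u, v} \<in> E1" using cl uv by (auto simp: K_def)
      then have "orth_subspaces d (S1 u) (S1 v)" using o1 uv by (auto simp: osr_def K_def)
      then have "cinner d (e1 u i) (e1 v j) = 0"
        using e1S uv unfolding orth_subspaces_def K_def by blast
      then show ?thesis using False by (simp add: b_def p q)
    qed
  qed
  have finI: "finite I" using finK by (simp add: I_def)
  obtain U where U: "unitary d U" "\<forall>p\<in>I. U (a p) = b p"
    using unitary_exists[OF finI oa ob] by blast
  define f where "f v = U \<circ> e2 v" for v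
  have fK: "f v i = e1 v i" if "v \<in> K" "i < r" for v i
    using U(2) that by (auto simp: f_def a_def b_def I_def)
  have of: "onf d {..<r} (f v)" if "v \<in> V2" for v
    using e2[OF that] U(1) by (auto simp: onf_def unitary_def f_def)
  define S where "S v = (if v \<in> V1 then S1 v else cv.span (f v ` {..<r}))" for v
  have SV2: "S v = cv.span (f v ` {..<r})" if "v \<in> V2" for v
  proof (cases "v \<in> V1")
    case True
    then have "f v ` {..<r} = e1 v ` {..<r}" using fK that by (auto simp: K_def)
    then show ?thesis using e1 True by (simp add: S_def)
  next
    case False then show ?thesis by (simp add: S_def)
  qed
  have "osr V E d r S"
    unfolding osr_def
  proof (intro conjI ballI impI)
    fix v assume "v \<in> V"
    show "subspace_dim d r (S v)"
    proof (cases "v \<in> V1")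
      case True then show ?thesis using o1 by (simp add: S_def osr_def)
    next
      case False
      then have "v \<in> V2" using \<open>v \<in> V\<close> V by simp
      then show ?thesis using onf_sdim[OF of] SV2 by simp
    qed
  next
    fix u v assume uv: "u \<in> V" "v \<in> V" "{u, v} \<in> E"
    show "orth_subspaces d (S u) (S v)"
    proof (cases "{u, v} \<in> E1")
      case True
      then have "{u, v} \<subseteq> V1" using E1s by blast
      then show ?thesis using o1 True by (simp add: S_def osr_def)
    next
      case False
      then have E2: "{u, v} \<in> E2" using uv Eu by auto
      have uv2: "u \<in> V2" "v \<in> V2" using E2 E2s by blast+
      have ort: "orth_subspaces d (S2 u) (S2 v)" using o2 uv2 E2 by (simp add: osr_def)
      have "\<forall>x\<in>f u ` {..<r}. \<forall>y\<in>f v ` {..<r}. cinner d x y = 0"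
      proof (intro ballI)
        fix x y assume "x \<in> f u ` {..<r}" "y \<in> f v ` {..<r}"
        then obtain i j where ij: "i < r" "j < r" "x = f u i" "y = f v j" by auto
        have "cinner d x y = cinner d (e2 u i) (e2 v j)"
          using U(1) ij by (simp add: f_def unitary_def)
        also have "\<dots> = 0" using ort e2S uv2 ij unfolding orth_subspaces_def by blast
        finally show "cinner d x y = 0" .
      qed
      then show ?thesis unfolding orth_subspaces_def SV2[OF uv2(1)] SV2[OF uv2(2)]
        using span_orth by blast
    qed
  qed
  then show ?thesis by blast
qed

theorem mainTheorem14:
  fixes V V1 V2 :: "'a set" and E E1 E2 :: "'a set set" and t r :: nat
  assumes "simple_graph V1 E1" and "simple_graph V2 E2"
    and "clique_sum t V E V1 E1 V2 E2"
  shows "xi r V E = max (xi r V1 E1) (xi r V2 E2)"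
proof -
  have fin1: "finite V1" using assms(1) by (simp add: simple_graph_def)
  have VE: "V = V1 \<union> V2" "E = E1 \<union> E2" using assms(3) unfolding clique_sum_def by blast+
  have sub: "V1 \<subseteq> V" "V2 \<subseteq> V" "E1 \<subseteq> E" "E2 \<subseteq> E"
    using VE by blast+
  have ex1: "\<exists>d S. osr V1 E1 d r S" using osr_exists[OF assms(1)] by blast
  have ex2: "\<exists>d S. osr V2 E2 d r S" using osr_exists[OF assms(2)] by blast
  obtain S1 where S1: "osr V1 E1 (xi r V1 E1) r S1"
    using LeastI_ex[OF ex1] unfolding xi_def by blast
  obtain S2 where S2: "osr V2 E2 (xi r V2 E2) r S2"
    using LeastI_ex[OF ex2] unfolding xi_def by blast
  define m where "m = max (xi r V1 E1) (xi r V2 E2)"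
  have "\<exists>S. osr V E m r S"
    by (rule glue[OF assms(3) fin1 osr_lift[OF S1] osr_lift[OF S2]]) (auto simp: m_def)
  then obtain S0 where "osr V E m r S0" by blast
  then have le: "xi r V E \<le> m" unfolding xi_def by (intro Least_le exI)
  have ex: "\<exists>d S. osr V E d r S" using \<open>\<exists>S. osr V E m r S\<close> by blast
  obtain S where S: "osr V E (xi r V E) r S"
    using LeastI_ex[OF ex] unfolding xi_def by blast
  have "xi r V1 E1 \<le> xi r V E"
    using osr_restrict[OF S sub(1) sub(3)] unfolding xi_def by (intro Least_le exI)
  moreover have "xi r V2 E2 \<le> xi r V E"
    using osr_restrict[OF S sub(2) sub(4)] unfolding xi_def by (intro Least_le exI)
  ultimately show ?thesis using le by (simp add: m_def)
qed


end
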